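(* Let $K$ be a (not necessarily commutative) field and $K[X]$ the polynomial ring over $K$ in a central indeterminate $X$. Then the projective line $\mathbb{P}(K[X])$ is connected and has infinite diameter.
   Context: For a ring $R$ with $1$, a pair $(a,b)\in R^2$ is admissible if it is the first row of an invertible $2\times2$ matrix over $R$; $\mathbb{P}(R)$ is the set of cyclic submodules $R(a,b)$ of the left module $R^2$ with $(a,b)$ admissible. Two points $R(a,b)$, $R(c,d)$ are distant iff $\begin{pmatrix}a&b\\c&d\end{pmatrix}$ is invertible. Connectedness, distance (least number of edges of a joining path) and diameter (supremum of distances) refer to the graph on $\mathbb{P}(R)$ whose edges are pairs of distant points. *)

theory Defs
  imports "HOL-Computational_Algebra.Polynomial" "HOL-Library.Extended_Nat"
begin

text \<open>The library multiplication on 'a poly requires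
  commutativity, so we define the (convolution) product explicitly; X commutes
  with the coefficients.\<close>

definition pmul :: "'a::division_ring poly \<Rightarrow> 'a poly \<Rightarrow> 'a poly" where
  "pmul p q = (\<Sum>i\<le>degree p. \<Sum>j\<le>degree q. monom (coeff p i * coeff q j) (i + j))"

definition pone :: "'a::division_ring poly" where
  "pone = monom 1 0"

definition inv2 :: "'a::division_ring poly \<Rightarrow> 'a poly \<Rightarrow> 'a poly \<Rightarrow> 'a poly \<Rightarrow> bool" where
  "inv2 a b c d \<longleftrightarrow> (\<exists>a' b' c' d'.
      pmul a a' + pmul b c' = pone \<and> pmul a b' + pmul b d' = 0 \<and>
      pmul c a' + pmul d c' = 0 \<and> pmul c b' + pmul d d' = pone \<and>
      pmul a' a + pmul b' c = pone \<and> pmul a' b + pmul b' d = 0 \<and>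
      pmul c' a + pmul d' c = 0 \<and> pmul c' b + pmul d' d = pone)"

definition admissible :: "'a::division_ring poly \<Rightarrow> 'a poly \<Rightarrow> bool" where
  "admissible a b \<longleftrightarrow> (\<exists>c d. inv2 a b c d)"

definition cyc :: "'a::division_ring poly \<Rightarrow> 'a poly \<Rightarrow> ('a poly \<times> 'a poly) set" where
  "cyc a b = {(pmul r a, pmul r b) | r. True}"

definition projline :: "('a::division_ring poly \<times> 'a poly) set set" where
  "projline = {cyc a b | a b. admissible a b}"

definition distant :: "('a::division_ring poly \<times> 'a poly) set \<Rightarrow> ('a poly \<times> 'a poly) set \<Rightarrow> bool" where
  "distant P Q \<longleftrightarrow> (\<exists>a b c d. P = cyc a b \<and> Q = cyc c d \<and> inv2 a b c d)"

definition dist_edges :: "(('a::division_ring poly \<times> 'a poly) set \<times> ('a poly \<times> 'a poly) set) set" where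
  "dist_edges = {(P, Q). P \<in> projline \<and> Q \<in> projline \<and> distant P Q}"

definition pl_connected :: "'a::division_ring itself \<Rightarrow> bool" where
  "pl_connected _ \<longleftrightarrow> (\<forall>P\<in>(projline :: ('a poly \<times> 'a poly) set set). \<forall>Q\<in>projline.
       (P, Q) \<in> (dist_edges :: (('a poly \<times> 'a poly) set \<times> _) set)\<^sup>*)"

text \<open>Distance: least number of edges of a joining path (\<infinity> if none).\<close>
definition pl_dist :: "('a::division_ring poly \<times> 'a poly) set \<Rightarrow> ('a poly \<times> 'a poly) set \<Rightarrow> enat" where
  "pl_dist P Q = (INF n\<in>{n. (P, Q) \<in> dist_edges ^^ n}. enat n)"

definition pl_diameter :: "'a::division_ring itself \<Rightarrow> enat" where
  "pl_diameter _ = (SUP P\<in>(projline :: ('a poly \<times> 'a poly) set set). SUP Q\<in>projline. pl_dist P Q)"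

end

theory Submission
  imports Defs "HOL-Computational_Algebra.Formal_Power_Series"
begin


definition F :: "'a::division_ring poly \<Rightarrow> 'a fps" where "F p = Abs_fps (coeff p)"

lemma F_nth[simp]: "fps_nth (F p) n = coeff p n" by (simp add: F_def)

lemma F_inj: "F p = F q \<Longrightarrow> p = q"
  by (metis F_nth poly_eqI)

lemma F_eq_iff: "F p = F q \<longleftrightarrow> p = q" using F_inj by blast

lemma coeff_pmul: "coeff (pmul p q) n = (\<Sum>i=0..n. coeff p i * coeff q (n - i))"
proof -
  let ?f = "\<lambda>i. coeff p i * coeff q (n - i)"
  have inner: "(\<Sum>j\<le>degree q. (if i + j = n then coeff p i * coeff q j else 0))
      = (if i \<le> n then ?f i else 0)" for i
  proof (cases "i \<le> n \<and> n - i \<le> degree q")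
    case True
    then have "(\<Sum>j\<le>degree q. (if i + j = n then coeff p i * coeff q j else 0))
       = (\<Sum>j\<le>degree q. (if j = n - i then coeff p i * coeff q j else 0))"
      by (intro sum.cong) auto
    also have "\<dots> = ?f i" using True by simp
    finally show ?thesis using True by simp
  next
    case False
    then have "(\<Sum>j\<le>degree q. (if i + j = n then coeff p i * coeff q j else 0)) = 0"
      by (intro sum.neutral) auto
    moreover have "(if i \<le> n then ?f i else 0) = 0"
      using False by (auto simp: coeff_eq_0)
    ultimately show ?thesis by simp
  qed
  have "coeff (pmul p q) n = (\<Sum>i\<le>degree p. (if i \<le> n then ?f i else 0))"
    unfolding pmul_def by (simp add: coeff_sum coeff_monom inner)
  also have "\<dots> = (\<Sum>i\<in>{..degree p} \<inter> {..n}. ?f i)"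
    by (subst sum.inter_restrict) auto
  also have "\<dots> = (\<Sum>i\<in>{0..n}. ?f i)"
    by (rule sum.mono_neutral_left) (auto simp: coeff_eq_0)
  finally show ?thesis .
qed

lemma F_pmul[simp]: "F (pmul p q) = F p * F q"
  by (rule fps_ext) (simp add: coeff_pmul fps_mult_nth)

lemma F_add[simp]: "F (p + q) = F p + F q" by (rule fps_ext) simp
lemma F_diff[simp]: "F (p - q) = F p - F q" by (rule fps_ext) simp
lemma F_uminus[simp]: "F (- p) = - F p" by (rule fps_ext) simp
lemma F_0[simp]: "F 0 = 0" by (rule fps_ext) simp
lemma F_pone[simp]: "F pone = 1" by (rule fps_ext) (simp add: pone_def coeff_monom)
lemma F_const[simp]: "F [:c:] = fps_const c" by (rule fps_ext) (simp add: coeff_pCons')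
lemma F_eq_0[simp]: "F p = 0 \<longleftrightarrow> p = 0" using F_inj F_0 by metis

lemma pmul_eq_0_iff[simp]: "pmul p q = 0 \<longleftrightarrow> p = 0 \<or> q = 0"
  by (metis F_eq_0 F_pmul mult_eq_0_iff)

lemma pmul_0_left[simp]: "pmul 0 q = 0" by (rule F_inj) simp
lemma pmul_0_right[simp]: "pmul p 0 = 0" by (rule F_inj) simp
lemma pmul_pone_left[simp]: "pmul pone q = q" by (rule F_inj) simp
lemma pmul_pone_right[simp]: "pmul p pone = p" by (rule F_inj) simp

lemma pone_neq_0[simp]: "pone \<noteq> (0::'a::division_ring poly)"
  by (metis F_eq_0 F_pone one_neq_zero)

lemma fps_const_inv_l[simp]: "(c::'a::division_ring) \<noteq> 0 \<Longrightarrow> fps_const (inverse c) * (fps_const c * z) = z"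
  by (metis fps_const_1_eq_1 fps_const_mult left_inverse mult.assoc mult_1)
lemma fps_const_inv_r[simp]: "(c::'a::division_ring) \<noteq> 0 \<Longrightarrow> fps_const c * (fps_const (inverse c) * z) = z"
  by (metis fps_const_1_eq_1 fps_const_mult right_inverse mult.assoc mult_1)
lemma fps_const_inv_l'[simp]: "(c::'a::division_ring) \<noteq> 0 \<Longrightarrow> fps_const (inverse c) * fps_const c = 1"
  by simp
lemma fps_const_inv_r'[simp]: "(c::'a::division_ring) \<noteq> 0 \<Longrightarrow> fps_const c * fps_const (inverse c) = 1"
  by simp


lemma coeff_pmul_top: "coeff (pmul p q) (degree p + degree q) = coeff p (degree p) * coeff q (degree q)"
proof -
  let ?n = "degree p + degree q"
  have "coeff (pmul p q) ?n = (\<Sum>i\<in>{0..?n}. coeff p i * coeff q (?n - i))" by (rule coeff_pmul)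
  also have "\<dots> = (\<Sum>i\<in>{degree p}. coeff p i * coeff q (?n - i))"
  proof (rule sum.mono_neutral_right)
    show "\<forall>i\<in>{0..?n} - {degree p}. coeff p i * coeff q (?n - i) = 0"
    proof
      fix i assume "i \<in> {0..?n} - {degree p}"
      then have "i > degree p \<or> ?n - i > degree q" by auto
      then show "coeff p i * coeff q (?n - i) = 0" by (auto simp: coeff_eq_0)
    qed
  qed auto
  finally show ?thesis by simp
qed

lemma coeff_pmul_high: "n > degree p + degree q \<Longrightarrow> coeff (pmul p q) n = 0"
  unfolding coeff_pmul
proof (rule sum.neutral, rule ballI)
  fix i assume "n > degree p + degree q" "i \<in> {0..n}"
  then have "i > degree p \<or> n - i > degree q" by auto
  then show "coeff p i * coeff q (n - i) = 0" by (auto simp: coeff_eq_0)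
qed

lemma degree_pmul: "p \<noteq> 0 \<Longrightarrow> q \<noteq> 0 \<Longrightarrow> degree (pmul p q) = degree p + degree q"
  apply (rule antisym)
   apply (rule degree_le) apply (simp add: coeff_pmul_high)
  apply (rule le_degree) apply (simp add: coeff_pmul_top)
  done

lemma degree_pmul_le: "degree (pmul p q) \<le> degree p + degree q"
  by (cases "p = 0 \<or> q = 0") (auto simp: degree_pmul)

lemma unit_degree: "pmul p q = pone \<Longrightarrow> degree p = 0"
proof -
  assume h: "pmul p q = pone"
  then have "p \<noteq> 0" "q \<noteq> 0" by auto
  then have "degree p + degree q = degree (pone :: 'a poly)" using h degree_pmul by metis
  then show ?thesis by (simp add: pone_def degree_monom_eq)
qed

lemma deg0_const: "degree p = 0 \<Longrightarrow> p = [:coeff p 0:]" using degree_0_id by metis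


lemma m2_mult_inv:
  fixes a b c d a' b' c' d' e f g h e' f' g' h' :: "'r::ring_1"
  assumes M1: "a*a'+b*c' = 1" and M2: "a*b'+b*d' = 0" and M3: "c*a'+d*c' = 0" and M4: "c*b'+d*d' = 1"
    and M5: "a'*a+b'*c = 1" and M6: "a'*b+b'*d = 0" and M7: "c'*a+d'*c = 0" and M8: "c'*b+d'*d = 1"
    and N1: "e*e'+f*g' = 1" and N2: "e*f'+f*h' = 0" and N3: "g*e'+h*g' = 0" and N4: "g*f'+h*h' = 1"
    and N5: "e'*e+f'*g = 1" and N6: "e'*f+f'*h = 0" and N7: "g'*e+h'*g = 0" and N8: "g'*f+h'*h = 1"
  shows "(a*e+b*g)*(e'*a'+f'*c') + (a*f+b*h)*(g'*a'+h'*c') = 1"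
    "(a*e+b*g)*(e'*b'+f'*d') + (a*f+b*h)*(g'*b'+h'*d') = 0"
    "(c*e+d*g)*(e'*a'+f'*c') + (c*f+d*h)*(g'*a'+h'*c') = 0"
    "(c*e+d*g)*(e'*b'+f'*d') + (c*f+d*h)*(g'*b'+h'*d') = 1"
    "(e'*a'+f'*c')*(a*e+b*g) + (e'*b'+f'*d')*(c*e+d*g) = 1"
    "(e'*a'+f'*c')*(a*f+b*h) + (e'*b'+f'*d')*(c*f+d*h) = 0"
    "(g'*a'+h'*c')*(a*e+b*g) + (g'*b'+h'*d')*(c*e+d*g) = 0"
    "(g'*a'+h'*c')*(a*f+b*h) + (g'*b'+h'*d')*(c*f+d*h) = 1"
proof -
  have "(a*e+b*g)*(e'*a'+f'*c') + (a*f+b*h)*(g'*a'+h'*c') = a*(e*e'+f*g')*a' + a*(e*f'+f*h')*c' + b*(g*e'+h*g')*a' + b*(g*f'+h*h')*c'"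
    by (simp add: algebra_simps)
  then show "(a*e+b*g)*(e'*a'+f'*c') + (a*f+b*h)*(g'*a'+h'*c') = 1" by (simp add: N1 N2 N3 N4 M1)
  have "(a*e+b*g)*(e'*b'+f'*d') + (a*f+b*h)*(g'*b'+h'*d') = a*(e*e'+f*g')*b' + a*(e*f'+f*h')*d' + b*(g*e'+h*g')*b' + b*(g*f'+h*h')*d'"
    by (simp add: algebra_simps)
  then show "(a*e+b*g)*(e'*b'+f'*d') + (a*f+b*h)*(g'*b'+h'*d') = 0" by (simp add: N1 N2 N3 N4 M2)
  have "(c*e+d*g)*(e'*a'+f'*c') + (c*f+d*h)*(g'*a'+h'*c') = c*(e*e'+f*g')*a' + c*(e*f'+f*h')*c' + d*(g*e'+h*g')*a' + d*(g*f'+h*h')*c'"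
    by (simp add: algebra_simps)
  then show "(c*e+d*g)*(e'*a'+f'*c') + (c*f+d*h)*(g'*a'+h'*c') = 0" by (simp add: N1 N2 N3 N4 M3)
  have "(c*e+d*g)*(e'*b'+f'*d') + (c*f+d*h)*(g'*b'+h'*d') = c*(e*e'+f*g')*b' + c*(e*f'+f*h')*d' + d*(g*e'+h*g')*b' + d*(g*f'+h*h')*d'"
    by (simp add: algebra_simps)
  then show "(c*e+d*g)*(e'*b'+f'*d') + (c*f+d*h)*(g'*b'+h'*d') = 1" by (simp add: N1 N2 N3 N4 M4)
  have "(e'*a'+f'*c')*(a*e+b*g) + (e'*b'+f'*d')*(c*e+d*g) = e'*(a'*a+b'*c)*e + e'*(a'*b+b'*d)*g + f'*(c'*a+d'*c)*e + f'*(c'*b+d'*d)*g"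
    by (simp add: algebra_simps)
  then show "(e'*a'+f'*c')*(a*e+b*g) + (e'*b'+f'*d')*(c*e+d*g) = 1" by (simp add: M5 M6 M7 M8 N5)
  have "(e'*a'+f'*c')*(a*f+b*h) + (e'*b'+f'*d')*(c*f+d*h) = e'*(a'*a+b'*c)*f + e'*(a'*b+b'*d)*h + f'*(c'*a+d'*c)*f + f'*(c'*b+d'*d)*h"
    by (simp add: algebra_simps)
  then show "(e'*a'+f'*c')*(a*f+b*h) + (e'*b'+f'*d')*(c*f+d*h) = 0" by (simp add: M5 M6 M7 M8 N6)
  have "(g'*a'+h'*c')*(a*e+b*g) + (g'*b'+h'*d')*(c*e+d*g) = g'*(a'*a+b'*c)*e + g'*(a'*b+b'*d)*g + h'*(c'*a+d'*c)*e + h'*(c'*b+d'*d)*g"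
    by (simp add: algebra_simps)
  then show "(g'*a'+h'*c')*(a*e+b*g) + (g'*b'+h'*d')*(c*e+d*g) = 0" by (simp add: M5 M6 M7 M8 N7)
  have "(g'*a'+h'*c')*(a*f+b*h) + (g'*b'+h'*d')*(c*f+d*h) = g'*(a'*a+b'*c)*f + g'*(a'*b+b'*d)*h + h'*(c'*a+d'*c)*f + h'*(c'*b+d'*d)*h"
    by (simp add: algebra_simps)
  then show "(g'*a'+h'*c')*(a*f+b*h) + (g'*b'+h'*d')*(c*f+d*h) = 1" by (simp add: M5 M6 M7 M8 N8)
qed

lemma inv2_mult:
  assumes "inv2 a b c d" "inv2 e f g h"
  shows "inv2 (pmul a e + pmul b g) (pmul a f + pmul b h) (pmul c e + pmul d g) (pmul c f + pmul d h)"
proof -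
  obtain a' b' c' d' where M: "pmul a a' + pmul b c' = pone" "pmul a b' + pmul b d' = 0"
      "pmul c a' + pmul d c' = 0" "pmul c b' + pmul d d' = pone"
      "pmul a' a + pmul b' c = pone" "pmul a' b + pmul b' d = 0"
      "pmul c' a + pmul d' c = 0" "pmul c' b + pmul d' d = pone"
    using assms(1) unfolding inv2_def by blast
  obtain e' f' g' h' where N: "pmul e e' + pmul f g' = pone" "pmul e f' + pmul f h' = 0"
      "pmul g e' + pmul h g' = 0" "pmul g f' + pmul h h' = pone"
      "pmul e' e + pmul f' g = pone" "pmul e' f + pmul f' h = 0"
      "pmul g' e + pmul h' g = 0" "pmul g' f + pmul h' h = pone"
    using assms(2) unfolding inv2_def by blast
  have FM: "F a * F a' + F b * F c' = 1" "F a * F b' + F b * F d' = 0"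
      "F c * F a' + F d * F c' = 0" "F c * F b' + F d * F d' = 1"
      "F a' * F a + F b' * F c = 1" "F a' * F b + F b' * F d = 0"
      "F c' * F a + F d' * F c = 0" "F c' * F b + F d' * F d = 1"
    using M[THEN arg_cong[where f=F]] by simp_all
  have FN: "F e * F e' + F f * F g' = 1" "F e * F f' + F f * F h' = 0"
      "F g * F e' + F h * F g' = 0" "F g * F f' + F h * F h' = 1"
      "F e' * F e + F f' * F g = 1" "F e' * F f + F f' * F h = 0"
      "F g' * F e + F h' * F g = 0" "F g' * F f + F h' * F h = 1"
    using N[THEN arg_cong[where f=F]] by simp_all
  note R = m2_mult_inv[OF FM FN]
  show ?thesis unfolding inv2_def
    apply (rule exI[of _ "pmul e' a' + pmul f' c'"], rule exI[of _ "pmul e' b' + pmul f' d'"],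
           rule exI[of _ "pmul g' a' + pmul h' c'"], rule exI[of _ "pmul g' b' + pmul h' d'"])
    apply (intro conjI; rule F_inj)
    using R by simp_all
qed

lemma inv2_swap: "inv2 a b c d \<Longrightarrow> inv2 c d a b"
  unfolding inv2_def by (metis add.commute)


definition Phi :: "'a::division_ring poly \<Rightarrow> 'a poly \<Rightarrow> 'a poly \<Rightarrow> 'a poly \<Rightarrow> ('a poly \<times> 'a poly) set \<Rightarrow> ('a poly \<times> 'a poly) set" where
  "Phi m1 m2 m3 m4 P = (\<lambda>(x,y). (pmul x m1 + pmul y m3, pmul x m2 + pmul y m4)) ` P"

lemma pmul_lin: "pmul (pmul r a) m1 + pmul (pmul r b) m3 = pmul r (pmul a m1 + pmul b m3)"
  by (rule F_inj) (simp add: algebra_simps)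

lemma Phi_cyc: "Phi m1 m2 m3 m4 (cyc a b) = cyc (pmul a m1 + pmul b m3) (pmul a m2 + pmul b m4)"
  unfolding Phi_def cyc_def
proof (intro set_eqI iffI)
  fix z assume "z \<in> (\<lambda>(x, y). (pmul x m1 + pmul y m3, pmul x m2 + pmul y m4)) ` {(pmul r a, pmul r b) |r. True}"
  then show "z \<in> {(pmul r (pmul a m1 + pmul b m3), pmul r (pmul a m2 + pmul b m4)) |r. True}"
    by (auto simp: pmul_lin)
next
  fix z assume "z \<in> {(pmul r (pmul a m1 + pmul b m3), pmul r (pmul a m2 + pmul b m4)) |r. True}"
  then obtain r where "z = (pmul r (pmul a m1 + pmul b m3), pmul r (pmul a m2 + pmul b m4))" by auto
  then have "z = (\<lambda>(x, y). (pmul x m1 + pmul y m3, pmul x m2 + pmul y m4)) (pmul r a, pmul r b)"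
    by (simp add: pmul_lin)
  then show "z \<in> (\<lambda>(x, y). (pmul x m1 + pmul y m3, pmul x m2 + pmul y m4)) ` {(pmul r a, pmul r b) |r. True}"
    by blast
qed

lemma admissible_Phi: "inv2 m1 m2 m3 m4 \<Longrightarrow> admissible a b \<Longrightarrow> admissible (pmul a m1 + pmul b m3) (pmul a m2 + pmul b m4)"
  unfolding admissible_def using inv2_mult by blast

lemma edge_Phi:
  assumes m: "inv2 m1 m2 m3 m4" and e: "(P,Q) \<in> dist_edges"
  shows "(Phi m1 m2 m3 m4 P, Phi m1 m2 m3 m4 Q) \<in> dist_edges"
proof -
  have pl: "Phi m1 m2 m3 m4 R \<in> projline" if "R \<in> projline" for R
    using that admissible_Phi[OF m] unfolding projline_def by (fastforce simp: Phi_cyc)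
  obtain a b c d where "P = cyc a b" "Q = cyc c d" "inv2 a b c d"
    using e unfolding dist_edges_def distant_def by auto
  then have "distant (Phi m1 m2 m3 m4 P) (Phi m1 m2 m3 m4 Q)"
    unfolding distant_def using inv2_mult[OF _ m] by (simp add: Phi_cyc) blast
  then show ?thesis using e pl unfolding dist_edges_def by auto
qed

lemma relpow_Phi:
  assumes m: "inv2 m1 m2 m3 m4"
  shows "(P,Q) \<in> dist_edges ^^ n \<Longrightarrow> (Phi m1 m2 m3 m4 P, Phi m1 m2 m3 m4 Q) \<in> dist_edges ^^ n"
proof (induction n arbitrary: Q)
  case 0 then show ?case by simp
next
  case (Suc n)
  then obtain R where "(P,R) \<in> dist_edges ^^ n" "(R,Q) \<in> dist_edges" by auto
  then show ?case using Suc.IH edge_Phi[OF m] by auto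
qed

lemma rtrancl_Phi:
  assumes m: "inv2 m1 m2 m3 m4"
  shows "(P,Q) \<in> dist_edges\<^sup>* \<Longrightarrow> (Phi m1 m2 m3 m4 P, Phi m1 m2 m3 m4 Q) \<in> dist_edges\<^sup>*"
  using relpow_Phi[OF m] by (metis rtrancl_power)

lemma edge_intro: "inv2 a b c d \<Longrightarrow> (cyc a b, cyc c d) \<in> dist_edges"
  unfolding dist_edges_def projline_def distant_def admissible_def using inv2_swap by blast

lemma cyc_const_left:
  assumes "c \<noteq> 0"
  shows "cyc (pmul [:c:] a) (pmul [:c:] b) = cyc a b"
proof -
  have e1: "pmul (pmul r [:c:]) x = pmul r (pmul [:c:] x)" for r x
    by (rule F_inj) (simp add: algebra_simps)
  have e2: "pmul r x = pmul (pmul r [:inverse c:]) (pmul [:c:] x)" for r x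
    using assms by (intro F_inj) (simp add: mult.assoc)
  show ?thesis unfolding cyc_def
  proof (intro set_eqI iffI)
    fix z assume "z \<in> {(pmul r (pmul [:c:] a), pmul r (pmul [:c:] b)) |r. True}"
    then show "z \<in> {(pmul r a, pmul r b) |r. True}" by (auto simp: e1[symmetric])
  next
    fix z assume "z \<in> {(pmul r a, pmul r b) |r. True}"
    then show "z \<in> {(pmul r (pmul [:c:] a), pmul r (pmul [:c:] b)) |r. True}"
      using e2 by blast
  qed
qed


lemma pmul_uminus_right[simp]: "pmul p (- q) = - pmul p q" by (rule F_inj) simp
lemma pmul_uminus_left[simp]: "pmul (- p) q = - pmul p q" by (rule F_inj) simp

lemma unit_const: "pmul a a' = pone \<Longrightarrow> \<exists>\<alpha>. \<alpha> \<noteq> 0 \<and> a = [:\<alpha>:]"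
proof -
  assume h: "pmul a a' = pone"
  then have "degree a = 0" "a \<noteq> 0" using unit_degree by fastforce+
  then show ?thesis using deg0_const by (metis pCons_0_0)
qed

lemma adm_zero_right: "inv2 a 0 c d \<Longrightarrow> \<exists>\<alpha>. \<alpha> \<noteq> 0 \<and> a = [:\<alpha>:]"
  unfolding inv2_def using unit_const by fastforce

lemma adm_zero_left: "admissible 0 b \<Longrightarrow> degree b = 0"
  unfolding admissible_def inv2_def using unit_degree by fastforce

lemma reduce:
  assumes "b \<noteq> 0" "degree b \<le> degree a" "a \<noteq> 0"
  defines "q \<equiv> monom (inverse (lead_coeff b) * lead_coeff a) (degree a - degree b)"
  shows "a - pmul b q = 0 \<or> degree (a - pmul b q) < degree a"
proof -
  have c0: "inverse (lead_coeff b) * lead_coeff a \<noteq> 0" using assms by simp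
  then have q0: "q \<noteq> 0" and dq: "degree q = degree a - degree b" and lq: "lead_coeff q = inverse (lead_coeff b) * lead_coeff a"
    unfolding q_def by (auto simp: degree_monom_eq)
  have dbq: "degree (pmul b q) = degree a" using degree_pmul[OF assms(1) q0] dq assms(2) by simp
  have lbq: "coeff (pmul b q) (degree a) = lead_coeff a"
    using coeff_pmul_top[of b q] dq assms(1,2) lq by (simp add: mult.assoc[symmetric])
  have "degree (a - pmul b q) \<le> degree a" using degree_diff_le[of a "degree a" "pmul b q"] dbq by simp
  moreover have "coeff (a - pmul b q) (degree a) = 0" using lbq by simp
  ultimately show ?thesis by (metis le_neq_implies_less leading_coeff_0_iff)
qed

lemma inv2_const_edge:
  assumes "\<beta> \<noteq> 0" shows "inv2 a [:\<beta>:] pone 0"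
  unfolding inv2_def
  apply (rule exI[of _ 0], rule exI[of _ pone], rule exI[of _ "[:inverse \<beta>:]"], rule exI[of _ "- pmul [:inverse \<beta>:] a"])
  apply (intro conjI; rule F_inj)
  using assms by (simp_all add: mult.assoc[symmetric])

lemma inv2_T1: "inv2 pone 0 q pone"
  unfolding inv2_def
  by (rule exI[of _ pone], rule exI[of _ 0], rule exI[of _ "- q"], rule exI[of _ pone])
     (intro conjI; rule F_inj; simp)

lemma inv2_T2: "inv2 pone q 0 pone"
  unfolding inv2_def
  by (rule exI[of _ pone], rule exI[of _ "- q"], rule exI[of _ 0], rule exI[of _ pone])
     (intro conjI; rule F_inj; simp)

lemma inv2_S: "inv2 0 pone pone 0"
  unfolding inv2_def
  by (rule exI[of _ 0], rule exI[of _ pone], rule exI[of _ pone], rule exI[of _ 0])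
     (intro conjI; rule F_inj; simp)

lemma conn: "admissible a b \<Longrightarrow> (cyc a b, cyc pone 0) \<in> dist_edges\<^sup>*"
proof (induction "degree a + degree b" arbitrary: a b rule: less_induct)
  case less
  show ?case
  proof (cases "b = 0")
    case True
    then obtain c d where "inv2 a 0 c d" using less.prems unfolding admissible_def by auto
    then obtain \<alpha> where al: "\<alpha> \<noteq> 0" "a = [:\<alpha>:]" using adm_zero_right by blast
    then have "cyc a b = cyc pone 0" using True cyc_const_left[OF al(1), of pone 0] by simp
    then show ?thesis by simp
  next
    case bnz: False
    show ?thesis
    proof (cases "degree b = 0")
      case True
      then obtain \<beta> where "\<beta> \<noteq> 0" "b = [:\<beta>:]" using bnz deg0_const by (metis pCons_0_0)
      then show ?thesis using edge_intro[OF inv2_const_edge] by blast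
    next
      case False
      then have anz: "a \<noteq> 0" using adm_zero_left[of b] less.prems by auto
      show ?thesis
      proof (cases "degree b \<le> degree a")
        case True
        define q where "q = monom (inverse (lead_coeff b) * lead_coeff a) (degree a - degree b)"
        define a' where "a' = a - pmul b q"
        have "a' = 0 \<or> degree a' < degree a" using reduce[OF bnz True anz] unfolding a'_def q_def by simp
        then have lt: "degree a' + degree b < degree a + degree b" using False True by auto
        have "admissible (pmul a pone + pmul b (- q)) (pmul a 0 + pmul b pone)"
          by (rule admissible_Phi[OF inv2_T1 less.prems])
        then have "admissible a' b" unfolding a'_def by simp
        then have "(cyc a' b, cyc pone 0) \<in> dist_edges\<^sup>*" using less.hyps lt by blast
        from rtrancl_Phi[OF inv2_T1[of q] this]
        show ?thesis by (simp add: Phi_cyc a'_def)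
      next
        case False
        define q where "q = monom (inverse (lead_coeff a) * lead_coeff b) (degree b - degree a)"
        define b' where "b' = b - pmul a q"
        have "b' = 0 \<or> degree b' < degree b" using reduce[OF anz _ bnz] False unfolding b'_def q_def by simp
        then have lt: "degree a + degree b' < degree a + degree b" using False by auto
        have "admissible (pmul a pone + pmul b 0) (pmul a (- q) + pmul b pone)"
          by (rule admissible_Phi[OF inv2_T2 less.prems])
        then have "admissible a b'" unfolding b'_def by simp
        then have "(cyc a b', cyc pone 0) \<in> dist_edges\<^sup>*" using less.hyps lt by blast
        from rtrancl_Phi[OF inv2_T2[of q] this]
        have "(cyc a b, cyc pone q) \<in> dist_edges\<^sup>*" by (simp add: Phi_cyc b'_def)
        moreover have "(cyc pone q, cyc 0 pone) \<in> dist_edges" using edge_intro[OF inv2_T2] .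
        moreover have "(cyc 0 pone, cyc pone 0) \<in> dist_edges" using edge_intro[OF inv2_S] .
        ultimately show ?thesis by (meson rtrancl_into_rtrancl)
      qed
    qed
  qed
qed

lemma sym_edges: "sym dist_edges"
  unfolding sym_def dist_edges_def distant_def using inv2_swap by blast

lemma connected: "pl_connected TYPE('a::division_ring)"
  unfolding pl_connected_def
proof (intro ballI)
  fix P Q :: "('a poly \<times> 'a poly) set"
  assume "P \<in> projline" "Q \<in> projline"
  then obtain a b c d where "P = cyc a b" "admissible a b" "Q = cyc c d" "admissible c d"
    unfolding projline_def by auto
  then have "(P, cyc pone 0) \<in> dist_edges\<^sup>*" "(Q, cyc pone 0) \<in> dist_edges\<^sup>*" using conn by auto
  then show "(P, Q) \<in> dist_edges\<^sup>*"
    using sym_rtrancl[OF sym_edges] by (meson rtrancl_trans symD)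
qed


definition small :: "'a::division_ring poly \<Rightarrow> 'a poly \<Rightarrow> bool" where
  "small r b \<longleftrightarrow> r = 0 \<or> degree r < degree b"

fun Long :: "nat \<Rightarrow> 'a::division_ring poly \<Rightarrow> 'a poly \<Rightarrow> bool" where
  "Long 0 a b = True"
| "Long (Suc k) a b = (b \<noteq> 0 \<and> (\<forall>q. small (a - pmul b q) b \<longrightarrow> Long k b (a - pmul b q)))"

lemma Long_mono: "Long (Suc k) a b \<Longrightarrow> Long k a b"
proof (induction k arbitrary: a b)
  case 0 then show ?case by simp
next
  case (Suc k) then show ?case by auto
qed

lemma Long_mono_le: "m \<le> k \<Longrightarrow> Long k a b \<Longrightarrow> Long m a b"
proof (induction k)
  case 0 then show ?case by simp
next
  case (Suc k)
  show ?case
  proof (cases "m = Suc k")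
    case True then show ?thesis using Suc.prems by simp
  next
    case False then show ?thesis using Suc.prems Suc.IH Long_mono[of k a b] by simp
  qed
qed

lemma Long_T: "Long k a b \<Longrightarrow> Long k (a - pmul b t) b"
proof (cases k)
  case 0 then show ?thesis by simp
next
  case (Suc k')
  assume h: "Long k a b"
  have e: "a - pmul b t - pmul b q = a - pmul b (t + q)" for q by (rule F_inj) (simp add: algebra_simps)
  show ?thesis using h unfolding Suc by (simp add: e)
qed

lemma degree_pmul_const: "c \<noteq> 0 \<Longrightarrow> degree (pmul p [:c:]) = degree p"
  by (cases "p = 0") (simp_all add: degree_pmul)

lemma Long_diag: "u \<noteq> 0 \<Longrightarrow> v \<noteq> 0 \<Longrightarrow> Long k a b \<Longrightarrow> Long k (pmul a [:u:]) (pmul b [:v:])"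
proof (induction k arbitrary: a b u v)
  case 0 then show ?case by simp
next
  case (Suc k)
  from Suc.prems have bnz: "b \<noteq> 0" and H: "\<And>q. small (a - pmul b q) b \<Longrightarrow> Long k b (a - pmul b q)" by auto
  show ?case
  proof (simp only: Long.simps, intro conjI allI impI)
    show "pmul b [:v:] \<noteq> 0" using bnz Suc.prems by simp
  next
    fix q
    let ?s = "pmul a [:u:] - pmul (pmul b [:v:]) q"
    assume sm: "small ?s (pmul b [:v:])"
    have e1: "a - pmul b (pmul [:v:] (pmul q [:inverse u:])) = pmul ?s [:inverse u:]"
      using Suc.prems by (intro F_inj) (simp add: algebra_simps)
    have "small (pmul ?s [:inverse u:]) b"
      using sm Suc.prems unfolding small_def by (auto simp: degree_pmul_const)
    then have "Long k b (pmul ?s [:inverse u:])" using H[of "pmul [:v:] (pmul q [:inverse u:])"] e1 by simp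
    from Suc.IH[OF Suc.prems(2) _ this, of u]
    have "Long k (pmul b [:v:]) (pmul (pmul ?s [:inverse u:]) [:u:])" using Suc.prems by simp
    moreover have "pmul (pmul ?s [:inverse u:]) [:u:] = ?s"
      using Suc.prems by (intro F_inj) (simp add: algebra_simps)
    ultimately show "Long k (pmul b [:v:]) ?s" by simp
  qed
qed

lemma nsmall:
  assumes "u \<noteq> 0" "w \<noteq> 0" "v = 0 \<or> degree v < degree u + degree w"
  shows "\<not> small (pmul u w + v) u"
proof -
  have d: "degree (pmul u w) = degree u + degree w" using degree_pmul assms by blast
  have nz: "pmul u w \<noteq> 0" using assms by simp
  show ?thesis
  proof (cases "v = 0")
    case True then show ?thesis using d nz unfolding small_def by simp
  next
    case False
    then have dl: "degree v < degree (pmul u w)" using assms(3) d by simp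
    then have "degree (pmul u w + v) = degree (pmul u w)" by (rule degree_add_eq_left)
    moreover have "pmul u w + v \<noteq> 0"
    proof
      assume "pmul u w + v = 0"
      then have "v = - pmul u w" by (simp add: eq_neg_iff_add_eq_0 add.commute)
      then show False using dl by simp
    qed
    ultimately show ?thesis using d unfolding small_def by simp
  qed
qed



lemma fps_const_m1: "fps_const (- 1 :: 'a::ring_1) = - 1"
  by (metis fps_const_1_eq_1 fps_const_neg)

lemma Long_swap: "Long (Suc k) x y \<Longrightarrow> Long k y x"
proof (cases k)
  case 0 then show ?thesis by simp
next
  case (Suc k')
  assume h: "Long (Suc k) x y"
  then have ynz: "y \<noteq> 0" and H: "\<And>q. small (x - pmul y q) y \<Longrightarrow> Long k y (x - pmul y q)" by auto
  have xnz: "x \<noteq> 0"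
  proof
    assume "x = 0"
    then have "Long k y 0" using H[of 0] unfolding small_def by simp
    then show False unfolding Suc by simp
  qed
  show ?thesis
  proof (cases "degree x < degree y")
    case True
    then show ?thesis using H[of 0] unfolding small_def by simp
  next
    case False
    have rw: "y - pmul x q = pmul x (- q) + y" for q by (rule F_inj) (simp add: algebra_simps)
    show ?thesis unfolding Suc
    proof (simp only: Long.simps, intro conjI allI impI)
      show "x \<noteq> 0" by (rule xnz)
    next
      fix q assume sm: "small (y - pmul x q) x"
      show "Long k' x (y - pmul x q)"
      proof (cases "degree y < degree x")
        case True
        have "q = 0"
        proof (rule ccontr)
          assume "q \<noteq> 0"
          then have "\<not> small (pmul x (- q) + y) x" using True by (intro nsmall xnz) auto
          then show False using sm by (simp only: rw)
        qed
        then show ?thesis using Long_mono[OF Long_mono[OF h[unfolded Suc]]] by simp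
      next
        case False2: False
        then have deq: "degree x = degree y" using False by simp
        have qnz: "q \<noteq> 0"
        proof
          assume "q = 0" then show False using sm ynz deq unfolding small_def by simp
        qed
        have "degree q = 0"
        proof (rule ccontr)
          assume "degree q \<noteq> 0"
          then have "\<not> small (pmul x (- q) + y) x" using qnz deq by (intro nsmall xnz) auto
          then show False using sm by (simp only: rw)
        qed
        then obtain c where c: "c \<noteq> 0" "q = [:c:]" using qnz deg0_const by (metis pCons_0_0)
        define s where "s = y - pmul x q"
        have e1: "x - pmul y [:inverse c:] = - pmul s [:inverse c:]"
          unfolding s_def c(2) using c(1) by (intro F_inj) (simp add: algebra_simps fps_const_m1)
        have "small (- pmul s [:inverse c:]) y"
          using sm deq c(1) unfolding small_def s_def by (auto simp: degree_pmul_const)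
        then have "Long k y (- pmul s [:inverse c:])" using H[of "[:inverse c:]"] e1 by simp
        then have "Long k' y (- pmul s [:inverse c:])" using Long_mono unfolding Suc by blast
        from Long_diag[OF _ _ this, of "inverse c" "- c"]
        have "Long k' (pmul y [:inverse c:]) (pmul (- pmul s [:inverse c:]) [:- c:])" using c by simp
        moreover have "pmul (- pmul s [:inverse c:]) [:- c:] = s"
          using c(1) by (intro F_inj) (simp add: algebra_simps fps_const_m1)
        ultimately have "Long k' (pmul y [:inverse c:]) s" by simp
        from Long_T[OF this, of "[:inverse c:]"]
        have "Long k' (pmul y [:inverse c:] - pmul s [:inverse c:]) s" .
        moreover have "pmul y [:inverse c:] - pmul s [:inverse c:] = x"
          unfolding s_def c(2) using c(1) by (intro F_inj) (simp add: algebra_simps fps_const_m1)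
        ultimately show ?thesis unfolding s_def by simp
      qed
    qed
  qed
qed


lemma cyc_pone0_mem: "cyc a b = cyc pone 0 \<Longrightarrow> b = 0"
proof -
  assume h: "cyc a b = cyc pone 0"
  have "(a, b) \<in> cyc a b" unfolding cyc_def by (auto intro!: exI[of _ pone])
  then show "b = 0" using h unfolding cyc_def by auto
qed

lemma inv2_M: "inv2 0 pone pone (- t)"
  unfolding inv2_def
  by (rule exI[of _ t], rule exI[of _ pone], rule exI[of _ pone], rule exI[of _ 0])
     (intro conjI; rule F_inj; simp)

lemma path_bound: "(cyc pone 0, P) \<in> dist_edges ^^ n \<Longrightarrow> P = cyc a b \<Longrightarrow> \<not> Long (Suc n) a b"
proof (induction n arbitrary: P a b)
  case 0
  then have "cyc a b = cyc pone 0" by simp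
  then have "b = 0" by (rule cyc_pone0_mem)
  then show ?case by simp
next
  case (Suc n)
  obtain P1 where e1: "(cyc pone 0, P1) \<in> dist_edges" and p: "(P1, P) \<in> dist_edges ^^ n"
    using relpow_Suc_D2[OF Suc.prems(1)] by blast
  obtain a0 b0 c d where h0: "cyc pone 0 = cyc a0 b0" "P1 = cyc c d" "inv2 a0 b0 c d"
    using e1 unfolding dist_edges_def distant_def by blast
  have "b0 = 0" using h0(1) cyc_pone0_mem by metis
  then obtain a' b' c' d' where i: "pmul a0 a' = pone" "pmul a0 b' = 0" "pmul c b' + pmul d d' = pone"
    using h0(3) unfolding inv2_def by auto
  have "a0 \<noteq> 0" using i(1) by auto
  then have "b' = 0" using i(2) by simp
  then have "pmul d d' = pone" using i(3) by simp
  then obtain \<delta> where dl: "\<delta> \<noteq> 0" "d = [:\<delta>:]" using unit_const by blast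
  define t where "t = pmul [:inverse \<delta>:] c"
  have "pmul [:inverse \<delta>:] [:\<delta>:] = pone" using dl(1) by (intro F_inj) simp
  then have P1: "P1 = cyc t pone"
    using cyc_const_left[of "inverse \<delta>" c d] dl h0(2) unfolding t_def by simp
  from relpow_Phi[OF inv2_M[of t] p]
  have "(Phi 0 pone pone (- t) P1, Phi 0 pone pone (- t) P) \<in> dist_edges ^^ n" .
  moreover have "Phi 0 pone pone (- t) P1 = cyc pone 0" unfolding P1 Phi_cyc by simp
  moreover have "Phi 0 pone pone (- t) P = cyc b (a - pmul b t)" unfolding Suc.prems(2) Phi_cyc by simp
  ultimately have "(cyc pone 0, cyc b (a - pmul b t)) \<in> dist_edges ^^ n" by simp
  then have "\<not> Long (Suc n) b (a - pmul b t)" using Suc.IH by blast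
  then show ?case using Long_swap Long_T by blast
qed

definition Xp :: "'a::division_ring poly" where "Xp = monom 1 1"

fun cont :: "nat \<Rightarrow> 'a::division_ring poly \<times> 'a poly" where
  "cont 0 = (pone, 0)"
| "cont (Suc k) = (pmul (fst (cont k)) Xp + snd (cont k), fst (cont k))"

lemma inv2_X: "inv2 Xp pone pone 0"
  unfolding inv2_def
  by (rule exI[of _ 0], rule exI[of _ pone], rule exI[of _ pone], rule exI[of _ "- Xp"])
     (intro conjI; rule F_inj; simp)

lemma cont_props:
  fixes k :: nat
  defines "C \<equiv> (cont k :: 'a::division_ring poly \<times> 'a poly)"
  shows "fst C \<noteq> 0 \<and> degree (fst C) = k \<and> small (snd C) (fst C)
   \<and> admissible (fst C) (snd C) \<and> Long k (fst C) (snd C)"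
  unfolding C_def
proof (induction k)
  case 0
  have "admissible (fst (cont 0)) (snd (cont 0))" unfolding admissible_def using inv2_T1[of 0] by auto
  then show ?case by (simp add: small_def pone_def degree_monom_eq)
next
  case (Suc k)
  define u :: "'a poly" where "u = fst (cont k)"
  define v :: "'a poly" where "v = snd (cont k)"
  have unz: "u \<noteq> 0" and du: "degree u = k" and sv: "small v u" and ad: "admissible u v" and L: "Long k u v"
    using Suc unfolding u_def v_def by auto
  have Xnz: "(Xp::'a poly) \<noteq> 0" and dX: "degree (Xp::'a poly) = 1" by (auto simp: Xp_def degree_monom_eq)
  have duX: "degree (pmul u Xp) = k + 1" using degree_pmul[OF unz Xnz] du dX by simp
  have dv: "v = 0 \<or> degree v < k" using sv du unfolding small_def by auto
  have d': "degree (pmul u Xp + v) = k + 1"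
  proof (cases "v = 0")
    case False
    then have "degree v < degree (pmul u Xp)" using dv duX by simp
    then show ?thesis using duX by (simp add: degree_add_eq_left)
  qed (simp add: duX)
  have nz': "pmul u Xp + v \<noteq> 0" using d' by auto
  have ad': "admissible (pmul u Xp + v) u"
    using admissible_Phi[OF inv2_X ad] by simp
  have L': "Long (Suc k) (pmul u Xp + v) u"
  proof (simp only: Long.simps, intro conjI allI impI)
    show "u \<noteq> 0" by (rule unz)
  next
    fix q assume sm: "small (pmul u Xp + v - pmul u q) u"
    have rw: "pmul u Xp + v - pmul u q = pmul u (Xp - q) + v" by (rule F_inj) (simp add: algebra_simps)
    have "Xp - q = 0"
    proof (rule ccontr)
      assume "Xp - q \<noteq> 0"
      then have "\<not> small (pmul u (Xp - q) + v) u" using dv du by (intro nsmall unz) auto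
      then show False using sm by (simp only: rw)
    qed
    then have "pmul u Xp + v - pmul u q = v" using rw by simp
    then show "Long k u (pmul u Xp + v - pmul u q)" using L by simp
  qed
  show ?case using nz' d' ad' L' unz du unfolding u_def v_def small_def by simp
qed

lemma diameter: "pl_diameter TYPE('a::division_ring) = \<infinity>"
proof -
  let ?D = "pl_diameter TYPE('a)"
  have inf: "cyc pone (0::'a poly) \<in> projline"
    unfolding projline_def admissible_def using inv2_T1[of 0] by blast
  have "enat N \<le> ?D" for N
  proof -
    obtain u v :: "'a poly" where uv: "(cont N :: 'a poly \<times> 'a poly) = (u, v)" by fastforce
    have props0: "admissible (fst (cont N :: 'a poly \<times> 'a poly)) (snd (cont N :: 'a poly \<times> 'a poly)) \<and> Long N (fst (cont N :: 'a poly \<times> 'a poly)) (snd (cont N :: 'a poly \<times> 'a poly))"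
      using cont_props[of N, where 'a='a] by blast
    have props: "admissible u v" "Long N u v" using props0 uv by auto
    have Q: "cyc u v \<in> (projline :: ('a poly \<times> 'a poly) set set)" using props(1) unfolding projline_def by blast
    have "enat N \<le> pl_dist (cyc pone 0) (cyc u v)"
      unfolding pl_dist_def
    proof (rule INF_greatest)
      fix n assume "n \<in> {n. (cyc pone 0, cyc u v) \<in> dist_edges ^^ n}"
      then have "\<not> Long (Suc n) u v" using path_bound by blast
      then have "\<not> Suc n \<le> N" using Long_mono_le props(2) by blast
      then show "enat N \<le> enat n" by simp
    qed
    also have "\<dots> \<le> ?D" unfolding pl_diameter_def
      by (rule SUP_upper2[OF inf], rule SUP_upper[OF Q])
    finally show ?thesis .
  qed
  then show ?thesis
  proof (cases ?D)
    case (enat m)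
    then show ?thesis using \<open>\<And>N. enat N \<le> ?D\<close>[of "Suc m"] by simp
  qed simp
qed

theorem mainTheorem12:
  shows "pl_connected TYPE('a::division_ring) \<and> pl_diameter TYPE('a) = \<infinity>"
  using connected diameter by blast

end
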